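(* Let $\rho = (\mathcal{V}, V, \mathbf{1}, \mathrm{var}, \mathrm{low}, \mathrm{high}, \mathrm{flip})$ be a COBDD with $\mathcal{V} = \mathcal{X} \,\dot\cup\, \mathcal{U}$, $\mathcal X=\{x_1,\dots,x_n\}$, $\mathcal U=\{u_1,\dots,u_r\}$, let $v \in V$ be a node and $b \in \mathbb{B}$ a flipping bit, and let $[\![ v, b]\!] = K(\mathbf{x}, \mathbf{u})$. Then the procedure SolveFunctionalEq$(\rho, v, b)$ outputs nodes $v_1, \ldots, v_r$ and boolean values $b_1, \ldots, b_r$ such that, writing $f_i(\mathbf x) := [\![ v_i, b_i]\!]$ for $i \in \{1,\dots,r\}$ (each $f_i$ depends only on $\mathbf x$), every $\mathbf{x} \in \mathrm{Dom}(K)$ satisfies $K(\mathbf{x}, f_1(\mathbf{x}), \ldots, f_r(\mathbf{x})) = 1$.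
   Context: $\mathbb{B}=\{0,1\}$; $+$, juxtaposition, $\bar{\ }$, $\oplus$ denote OR, AND, complement, XOR; $f|_{y=g}$ denotes substitution of $g$ for variable $y$ in $f$, and $\exists y\, f := f|_{y=0}+f|_{y=1}$. A COBDD is a tuple $\rho = (\mathcal{V}, V, \mathbf{1}, \mathrm{var}, \mathrm{low}, \mathrm{high}, \mathrm{flip})$ with $\mathcal V$ a finite totally ordered set of boolean variables, $V$ a finite set of nodes, $\mathbf 1\in V$ the terminal node, $\mathrm{var}: V\setminus\{\mathbf 1\}\to\mathcal V$, $\mathrm{high},\mathrm{low}: V\setminus\{\mathbf 1\}\to V$, $\mathrm{flip}: V\setminus\{\mathbf 1\}\to\mathbb B$, with variables strictly increasing along edges $v\to\mathrm{high}(v)$, $v\to\mathrm{low}(v)$; COBDDs are assumed reduced (no internal $v$ with $\mathrm{low}(v)=\mathrm{high}(v)$ and $\mathrm{flip}(v)=0$, and no two distinct nodes whose reachable sub-COBDDs are isomorphic). Semantics: $[\![ \mathbf 1, b]\!] := \bar b$ and, for internal $v$ with $\mathrm{var}(v)=y$, $[\![ v,b]\!] := y [\![ \mathrm{high}(v), b]\!] + \bar y [\![ \mathrm{low}(v), b\oplus \mathrm{flip}(v)]\!]$. Every boolean function is represented as $[\![ w,c]\!]$ for some node $w$ and bit $c$ (the COBDD being extended with new nodes as needed). Two operations are assumed available and correct: COBDD_APP, which given variables $y_1,\dots,y_k$, pairs $(w_1,c_1),\dots,(w_k,c_k)$ and $(w,c)$ returns $(w',c')$ with $[\![ w',c']\!]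 = [\![ w,c]\!]|_{y_1=[\![ w_1,c_1]\!],\dots,y_k=[\![ w_k,c_k]\!]}$; and COBDD_EX, which given variables $y_1,\dots,y_k$ and $(w,c)$ returns $(w',c')$ with $[\![ w',c']\!]=\exists y_1,\dots,y_k\,[\![ w,c]\!]$. The procedure SolveFunctionalEq$(\rho,v,b)$: for $i=1,\dots,r$ in order, it computes $(v_i,b_i)$ := COBDD_EX$(u_{i+1},\dots,u_r,$ COBDD_APP$(u_1,\dots,u_i, v_1,b_1,\dots,v_{i-1},b_{i-1},\mathbf 1,0, v,b))$, i.e. $[\![ v_i,b_i]\!] = \exists u_{i+1},\dots,u_r\, K(\mathbf x, [\![ v_1,b_1]\!],\dots,[\![ v_{i-1},b_{i-1}]\!], 1, u_{i+1},\dots,u_r)$ (note $[\![ \mathbf 1,0]\!]=1$); it returns $\langle v_1,b_1,\dots,v_r,b_r\rangle$. $\mathrm{Dom}(K) = \{\mathbf x \mid \exists \mathbf u\; K(\mathbf x,\mathbf u)=1\}$. *)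

theory Defs
  imports Main
begin

text \<open>COBDDs (complement-edge ordered BDDs).
  Fields that are only meaningful on internal nodes are total functions; only their values on
  nodes - {one} matter.\<close>

record ('v, 'n) cobdd =
  vars  :: "'v set"
  nodes :: "'n set"
  one   :: 'n
  var   :: "'n \<Rightarrow> 'v"
  low   :: "'n \<Rightarrow> 'n"
  high  :: "'n \<Rightarrow> 'n"
  flip  :: "'n \<Rightarrow> bool"

definition succs :: "('v, 'n) cobdd \<Rightarrow> ('n \<times> 'n) set" where
  "succs \<rho> = {(w, z). w \<in> nodes \<rho> \<and> w \<noteq> one \<rho> \<and> (z = low \<rho> w \<or> z = high \<rho> w)}"

definition reach :: "('v, 'n) cobdd \<Rightarrow> 'n \<Rightarrow> 'n set" where
  "reach \<rho> w = (succs \<rho>)\<^sup>* `` {w}"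

definition sub_iso :: "('v, 'n) cobdd \<Rightarrow> 'n \<Rightarrow> 'n \<Rightarrow> bool" where
  "sub_iso \<rho> w w' \<longleftrightarrow> (\<exists>h. bij_betw h (reach \<rho> w) (reach \<rho> w') \<and> h w = w' \<and>
     (\<forall>z\<in>reach \<rho> w. (z = one \<rho> \<longleftrightarrow> h z = one \<rho>) \<and>
        (z \<noteq> one \<rho> \<longrightarrow> var \<rho> (h z) = var \<rho> z \<and> low \<rho> (h z) = h (low \<rho> z) \<and>
                      high \<rho> (h z) = h (high \<rho> z) \<and> flip \<rho> (h z) = flip \<rho> z)))"

definition is_cobdd :: "('v::linorder, 'n) cobdd \<Rightarrow> bool" where
  "is_cobdd \<rho> \<longleftrightarrow> finite (vars \<rho>) \<and> finite (nodes \<rho>) \<and> one \<rho> \<in> nodes \<rho> \<and>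
     (\<forall>w\<in>nodes \<rho> - {one \<rho>}.
        var \<rho> w \<in> vars \<rho> \<and> low \<rho> w \<in> nodes \<rho> \<and> high \<rho> w \<in> nodes \<rho> \<and>
        (low \<rho> w \<noteq> one \<rho> \<longrightarrow> var \<rho> w < var \<rho> (low \<rho> w)) \<and>
        (high \<rho> w \<noteq> one \<rho> \<longrightarrow> var \<rho> w < var \<rho> (high \<rho> w)) \<and>
        \<not> (low \<rho> w = high \<rho> w \<and> \<not> flip \<rho> w)) \<and>
     (\<forall>w\<in>nodes \<rho>. \<forall>w'\<in>nodes \<rho>. w \<noteq> w' \<longrightarrow> \<not> sub_iso \<rho> w w')"

text \<open>Semantics: eval rho w b a r means [[w,b]] evaluates to r under assignment a.\<close>
inductive eval :: "('v, 'n) cobdd \<Rightarrow> 'n \<Rightarrow> bool \<Rightarrow> ('v \<Rightarrow> bool) \<Rightarrow> bool \<Rightarrow> bool"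
  for \<rho> where
  eval_one: "eval \<rho> (one \<rho>) b a (\<not> b)"
| eval_high: "w \<noteq> one \<rho> \<Longrightarrow> a (var \<rho> w) \<Longrightarrow> eval \<rho> (high \<rho> w) b a r \<Longrightarrow> eval \<rho> w b a r"
| eval_low: "w \<noteq> one \<rho> \<Longrightarrow> \<not> a (var \<rho> w) \<Longrightarrow> eval \<rho> (low \<rho> w) (b \<noteq> flip \<rho> w) a r
              \<Longrightarrow> eval \<rho> w b a r"

definition sem :: "('v, 'n) cobdd \<Rightarrow> 'n \<Rightarrow> bool \<Rightarrow> ('v \<Rightarrow> bool) \<Rightarrow> bool" where
  "sem \<rho> w b a = (THE r. eval \<rho> w b a r)"

definition extends :: "('v, 'n) cobdd \<Rightarrow> ('v, 'n) cobdd \<Rightarrow> bool" where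
  "extends \<rho> \<rho>' \<longleftrightarrow> vars \<rho>' = vars \<rho> \<and> nodes \<rho> \<subseteq> nodes \<rho>' \<and> one \<rho>' = one \<rho> \<and>
     (\<forall>w\<in>nodes \<rho> - {one \<rho>}. var \<rho>' w = var \<rho> w \<and> low \<rho>' w = low \<rho> w \<and>
        high \<rho>' w = high \<rho> w \<and> flip \<rho>' w = flip \<rho> w)"

definition subst_assign ::
  "('v, 'n) cobdd \<Rightarrow> 'v list \<Rightarrow> ('n \<times> bool) list \<Rightarrow> ('v \<Rightarrow> bool) \<Rightarrow> ('v \<Rightarrow> bool)" where
  "subst_assign \<rho> ys ps a = (\<lambda>y. case map_of (zip ys ps) y of
       None \<Rightarrow> a y | Some (w, c) \<Rightarrow> sem \<rho> w c a)"

type_synonym ('v, 'n) app_op =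
  "('v, 'n) cobdd \<Rightarrow> 'v list \<Rightarrow> ('n \<times> bool) list \<Rightarrow> 'n \<times> bool \<Rightarrow> ('v, 'n) cobdd \<times> 'n \<times> bool"
type_synonym ('v, 'n) ex_op =
  "('v, 'n) cobdd \<Rightarrow> 'v list \<Rightarrow> 'n \<times> bool \<Rightarrow> ('v, 'n) cobdd \<times> 'n \<times> bool"

definition app_correct :: "('v::linorder, 'n) app_op \<Rightarrow> bool" where
  "app_correct app \<longleftrightarrow> (\<forall>\<rho> ys ps w c. is_cobdd \<rho> \<and> distinct ys \<and> set ys \<subseteq> vars \<rho> \<and>
      length ps = length ys \<and> (\<forall>p\<in>set ps. fst p \<in> nodes \<rho>) \<and> w \<in> nodes \<rho> \<longrightarrow>
      (case app \<rho> ys ps (w, c) of (\<rho>', w', c') \<Rightarrow>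
         is_cobdd \<rho>' \<and> extends \<rho> \<rho>' \<and> w' \<in> nodes \<rho>' \<and>
         (\<forall>a. sem \<rho>' w' c' a = sem \<rho> w c (subst_assign \<rho> ys ps a))))"

definition ex_correct :: "('v::linorder, 'n) ex_op \<Rightarrow> bool" where
  "ex_correct ex \<longleftrightarrow> (\<forall>\<rho> ys w c. is_cobdd \<rho> \<and> set ys \<subseteq> vars \<rho> \<and> w \<in> nodes \<rho> \<longrightarrow>
      (case ex \<rho> ys (w, c) of (\<rho>', w', c') \<Rightarrow>
         is_cobdd \<rho>' \<and> extends \<rho> \<rho>' \<and> w' \<in> nodes \<rho>' \<and>
         (\<forall>a. sem \<rho>' w' c' a = (\<exists>a'. (\<forall>y. y \<notin> set ys \<longrightarrow> a' y = a y) \<and> sem \<rho> w c a'))))"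

text \<open>The loop of SolveFunctionalEq. acc holds the already processed (u_j, (v_j, b_j)).\<close>
fun solve_aux :: "('v, 'n) app_op \<Rightarrow> ('v, 'n) ex_op \<Rightarrow> ('v, 'n) cobdd \<Rightarrow>
    ('v \<times> ('n \<times> bool)) list \<Rightarrow> 'v list \<Rightarrow> 'n \<Rightarrow> bool \<Rightarrow> ('v, 'n) cobdd \<times> ('n \<times> bool) list" where
  "solve_aux app ex \<rho> acc [] v b = (\<rho>, [])"
| "solve_aux app ex \<rho> acc (u # rest) v b =
     (case app \<rho> (map fst acc @ [u]) (map snd acc @ [(one \<rho>, False)]) (v, b) of
       (\<rho>1, w1, c1) \<Rightarrow> (case ex \<rho>1 rest (w1, c1) of
         (\<rho>2, w2, c2) \<Rightarrow> (case solve_aux app ex \<rho>2 (acc @ [(u, (w2, c2))]) rest v b of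
           (\<rho>f, res) \<Rightarrow> (\<rho>f, (w2, c2) # res))))"

definition SolveFunctionalEq :: "('v, 'n) app_op \<Rightarrow> ('v, 'n) ex_op \<Rightarrow> ('v, 'n) cobdd \<Rightarrow>
    'v list \<Rightarrow> 'n \<Rightarrow> bool \<Rightarrow> ('v, 'n) cobdd \<times> ('n \<times> bool) list" where
  "SolveFunctionalEq app ex \<rho> us v b = solve_aux app ex \<rho> [] us v b"

end

theory Submission
  imports Defs
begin


lemma eval_det: "eval \<rho> w b a r \<Longrightarrow> eval \<rho> w b a r' \<Longrightarrow> r = r'"
proof (induction arbitrary: r' rule: eval.induct)
  case (eval_one b a)
  from eval_one show ?case by (cases rule: eval.cases) simp_all
next
  case (eval_high w a b r)
  from eval_high.prems eval_high.hyps eval_high.IH show ?case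
    by (cases rule: eval.cases) metis+
next
  case (eval_low w a b r)
  from eval_low.prems eval_low.hyps eval_low.IH show ?case
    by (cases rule: eval.cases) metis+
qed

lemma sem_eq: "eval \<rho> w b a r \<Longrightarrow> sem \<rho> w b a = r"
  unfolding sem_def by (rule the_equality) (auto dest: eval_det)

lemma cob_child:
  assumes "is_cobdd \<rho>" "w \<in> nodes \<rho>" "w \<noteq> one \<rho>"
  shows "var \<rho> w \<in> vars \<rho> \<and> low \<rho> w \<in> nodes \<rho> \<and> high \<rho> w \<in> nodes \<rho> \<and>
        (low \<rho> w \<noteq> one \<rho> \<longrightarrow> var \<rho> w < var \<rho> (low \<rho> w)) \<and>
        (high \<rho> w \<noteq> one \<rho> \<longrightarrow> var \<rho> w < var \<rho> (high \<rho> w))"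
  using assms unfolding is_cobdd_def by blast

lemma eval_total:
  assumes cob: "is_cobdd \<rho>" shows "w \<in> nodes \<rho> \<Longrightarrow> \<exists>r. eval \<rho> w b a r"
proof (induction "card {y\<in>vars \<rho>. var \<rho> w \<le> y}" arbitrary: w b rule: less_induct)
  case less
  show ?case
  proof (cases "w = one \<rho>")
    case True then show ?thesis using eval_one by blast
  next
    case False
    have fin: "finite (vars \<rho>)" using cob unfolding is_cobdd_def by blast
    note ch = cob_child[OF cob less.prems False]
    have child: "\<exists>r. eval \<rho> z c a r" if z: "z \<in> nodes \<rho>" and lt: "z \<noteq> one \<rho> \<Longrightarrow> var \<rho> w < var \<rho> z" for z c
    proof (cases "z = one \<rho>")
      case True then show ?thesis using eval_one by blast
    next
      case False
      then have "var \<rho> w < var \<rho> z" using lt by blast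
      then have s1: "{y\<in>vars \<rho>. var \<rho> z \<le> y} \<subseteq> {y\<in>vars \<rho>. var \<rho> w \<le> y}"
        by (auto intro: order.trans order.strict_implies_order)
      have s2: "var \<rho> w \<in> {y\<in>vars \<rho>. var \<rho> w \<le> y} - {y\<in>vars \<rho>. var \<rho> z \<le> y}"
        using ch \<open>var \<rho> w < var \<rho> z\<close> by (auto simp: not_le)
      from s1 s2 have "{y\<in>vars \<rho>. var \<rho> z \<le> y} \<subset> {y\<in>vars \<rho>. var \<rho> w \<le> y}" by blast
      then have "card {y\<in>vars \<rho>. var \<rho> z \<le> y} < card {y\<in>vars \<rho>. var \<rho> w \<le> y}"
        using fin by (simp add: psubset_card_mono)
      then show ?thesis using less z by blast
    qed
    show ?thesis
    proof (cases "a (var \<rho> w)")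
      case True
      obtain r where "eval \<rho> (high \<rho> w) b a r" using child[of "high \<rho> w" b] ch by blast
      then show ?thesis using False True by (blast intro: eval_high)
    next
      case F: False
      obtain r where "eval \<rho> (low \<rho> w) (b \<noteq> flip \<rho> w) a r" using child[of "low \<rho> w" "b \<noteq> flip \<rho> w"] ch by blast
      then show ?thesis using False F by (blast intro: eval_low)
    qed
  qed
qed

lemma sem_eval: "is_cobdd \<rho> \<Longrightarrow> w \<in> nodes \<rho> \<Longrightarrow> eval \<rho> w b a (sem \<rho> w b a)"
proof -
  assume "is_cobdd \<rho>" "w \<in> nodes \<rho>"
  then obtain r where "eval \<rho> w b a r" using eval_total[of \<rho> w b a] by blast
  moreover then have "sem \<rho> w b a = r" by (rule sem_eq)
  ultimately show ?thesis by simp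
qed

lemma sem_one: "sem \<rho> (one \<rho>) b a = (\<not> b)"
  by (rule sem_eq) (rule eval_one)

lemma extends_D:
  assumes "extends \<rho> \<rho>'"
  shows "vars \<rho>' = vars \<rho>" "nodes \<rho> \<subseteq> nodes \<rho>'" "one \<rho>' = one \<rho>"
    "w \<in> nodes \<rho> \<Longrightarrow> w \<noteq> one \<rho> \<Longrightarrow> var \<rho>' w = var \<rho> w \<and> low \<rho>' w = low \<rho> w \<and>
        high \<rho>' w = high \<rho> w \<and> flip \<rho>' w = flip \<rho> w"
  using assms unfolding extends_def by blast+

lemma eval_extends:
  assumes cob: "is_cobdd \<rho>" and ext: "extends \<rho> \<rho>'"
  shows "eval \<rho> w b a r \<Longrightarrow> w \<in> nodes \<rho> \<Longrightarrow> eval \<rho>' w b a r"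
proof (induction rule: eval.induct)
  case (eval_one b a)
  have "one \<rho>' = one \<rho>" by (rule extends_D(3)[OF ext])
  then show ?case using eval.eval_one[of \<rho>' b a] by simp
next
  case (eval_high w a b r)
  note ch = cob_child[OF cob eval_high.prems eval_high.hyps(1)]
  note e = extends_D(4)[OF ext eval_high.prems eval_high.hyps(1)] extends_D(3)[OF ext]
  have "eval \<rho>' (high \<rho> w) b a r" using eval_high.IH ch by blast
  then show ?case apply - apply (rule eval.eval_high) using eval_high.hyps(1,2) e by simp_all
next
  case (eval_low w a b r)
  note ch = cob_child[OF cob eval_low.prems eval_low.hyps(1)]
  note e = extends_D(4)[OF ext eval_low.prems eval_low.hyps(1)] extends_D(3)[OF ext]
  have "eval \<rho>' (low \<rho> w) (b \<noteq> flip \<rho> w) a r" using eval_low.IH ch by blast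
  then show ?case apply - apply (rule eval.eval_low) using eval_low.hyps(1,2) e by simp_all
qed

lemma sem_extends:
  assumes "is_cobdd \<rho>" "extends \<rho> \<rho>'" "w \<in> nodes \<rho>"
  shows "sem \<rho>' w c a = sem \<rho> w c a"
proof -
  have "eval \<rho> w c a (sem \<rho> w c a)" by (rule sem_eval[OF assms(1,3)])
  then have "eval \<rho>' w c a (sem \<rho> w c a)" by (rule eval_extends[OF assms(1,2) _ assms(3)])
  then show ?thesis by (rule sem_eq)
qed

lemma eval_local:
  assumes cob: "is_cobdd \<rho>"
  shows "eval \<rho> w b a r \<Longrightarrow> w \<in> nodes \<rho> \<Longrightarrow> \<forall>y\<in>vars \<rho>. a y = a' y \<Longrightarrow> eval \<rho> w b a' r"
proof (induction rule: eval.induct)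
  case (eval_one b a)
  show ?case by (simp add: eval.eval_one)
next
  case (eval_high w a b r)
  note ch = cob_child[OF cob eval_high.prems(1) eval_high.hyps(1)]
  have "eval \<rho> (high \<rho> w) b a' r" using eval_high.IH ch eval_high.prems(2) by blast
  then show ?case apply - apply (rule eval.eval_high) using eval_high.hyps(1,2) ch eval_high.prems(2) by simp_all
next
  case (eval_low w a b r)
  note ch = cob_child[OF cob eval_low.prems(1) eval_low.hyps(1)]
  have "eval \<rho> (low \<rho> w) (b \<noteq> flip \<rho> w) a' r" using eval_low.IH ch eval_low.prems(2) by blast
  then show ?case apply - apply (rule eval.eval_low) using eval_low.hyps(1,2) ch eval_low.prems(2) by simp_all
qed

lemma sem_local:
  assumes "is_cobdd \<rho>" "w \<in> nodes \<rho>" "\<forall>y\<in>vars \<rho>. a y = a' y"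
  shows "sem \<rho> w b a = sem \<rho> w b a'"
proof -
  have "eval \<rho> w b a (sem \<rho> w b a)" by (rule sem_eval[OF assms(1,2)])
  then have "eval \<rho> w b a' (sem \<rho> w b a)" using eval_local[OF assms(1)] assms(2,3) by blast
  then show ?thesis by (rule sem_eq[symmetric])
qed

lemma extends_refl: "extends \<rho> \<rho>"
  unfolding extends_def by auto

lemma extends_trans: "extends \<rho>1 \<rho>2 \<Longrightarrow> extends \<rho>2 \<rho>3 \<Longrightarrow> extends \<rho>1 \<rho>3"
  unfolding extends_def by (simp add: subset_iff)

lemma SA_eq:
  "subst_assign \<rho> (map fst acc @ [u]) (map snd acc @ [(one \<rho>, False)]) a y =
    (case map_of acc y of Some (w,c) \<Rightarrow> sem \<rho> w c a | None \<Rightarrow> (if y = u then True else a y))"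
proof -
  have z: "zip (map fst acc @ [u]) (map snd acc @ [(one \<rho>, False)]) = acc @ [(u, (one \<rho>, False))]"
    by (simp add: zip_map_fst_snd)
  show ?thesis unfolding subst_assign_def z
    by (auto simp: map_add_def sem_one split: option.split)
qed



definition xdep :: "('v, 'n) cobdd \<Rightarrow> 'v set \<Rightarrow> 'n \<Rightarrow> bool \<Rightarrow> bool" where
  "xdep \<rho> X w c \<longleftrightarrow> (\<forall>a a'. (\<forall>x\<in>X. a x = a' x) \<longrightarrow> sem \<rho> w c a = sem \<rho> w c a')"

lemma solve_aux_correct:
  fixes app :: "('v::linorder, 'n) app_op" and ex :: "('v, 'n) ex_op"
  assumes appc: "app_correct app" and exc: "ex_correct ex"
  shows "is_cobdd \<rho> \<Longrightarrow> vars \<rho> = X \<union> set (map fst acc @ rest) \<Longrightarrow>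
    X \<inter> set (map fst acc @ rest) = {} \<Longrightarrow> distinct (map fst acc @ rest) \<Longrightarrow> v \<in> nodes \<rho> \<Longrightarrow>
    (\<forall>(u,w,c)\<in>set acc. w \<in> nodes \<rho> \<and> xdep \<rho> X w c) \<Longrightarrow>
    (\<forall>a. (\<exists>a'. (\<forall>x\<in>X. a' x = a x) \<and> sem \<rho> v b a') \<longrightarrow>
       (\<exists>a''. (\<forall>x\<in>X. a'' x = a x) \<and> (\<forall>(u,w,c)\<in>set acc. a'' u = sem \<rho> w c a) \<and> sem \<rho> v b a'')) \<Longrightarrow>
    solve_aux app ex \<rho> acc rest v b = (\<rho>f, res) \<Longrightarrow>
    length res = length rest \<and> is_cobdd \<rho>f \<and> extends \<rho> \<rho>f \<and>
    (\<forall>(w,c)\<in>set res. w \<in> nodes \<rho>f \<and> xdep \<rho>f X w c) \<and>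
    (\<forall>a. (\<exists>a'. (\<forall>x\<in>X. a' x = a x) \<and> sem \<rho> v b a') \<longrightarrow>
       (\<exists>a''. (\<forall>x\<in>X. a'' x = a x) \<and> (\<forall>(u,w,c)\<in>set (acc @ zip rest res). a'' u = sem \<rho>f w c a)
          \<and> sem \<rho> v b a''))"
proof (induction rest arbitrary: \<rho> acc \<rho>f res)
  case Nil
  from Nil.prems(8) have "\<rho>f = \<rho>" "res = []" by simp_all
  then show ?case using Nil.prems(7) extends_refl Nil.prems(1) by simp
next
  case (Cons u rest)
  note cob = Cons.prems(1) and vars = Cons.prems(2) and disj = Cons.prems(3)
    and dist = Cons.prems(4) and vn = Cons.prems(5) and accinv = Cons.prems(6)
    and dominv = Cons.prems(7) and run = Cons.prems(8)
  define ys where "ys = map fst acc @ [u]"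
  define ps where "ps = map snd acc @ [(one \<rho>, False)]"
  define SA where "SA = subst_assign \<rho> ys ps"
  have SAe: "SA a y = (case map_of acc y of Some (w,c) \<Rightarrow> sem \<rho> w c a | None \<Rightarrow> (if y = u then True else a y))"
    for a y unfolding SA_def ys_def ps_def by (rule SA_eq)
  obtain \<rho>1 w1 c1 where A: "app \<rho> ys ps (v,b) = (\<rho>1,w1,c1)" by (cases "app \<rho> ys ps (v,b)") auto
  obtain \<rho>2 w2 c2 where E: "ex \<rho>1 rest (w1,c1) = (\<rho>2,w2,c2)" by (cases "ex \<rho>1 rest (w1,c1)") auto
  obtain \<rho>f' res' where S: "solve_aux app ex \<rho>2 (acc @ [(u,(w2,c2))]) rest v b = (\<rho>f', res')"
    by (cases "solve_aux app ex \<rho>2 (acc @ [(u,(w2,c2))]) rest v b") auto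
  have fr: "\<rho>f = \<rho>f'" "res = (w2,c2) # res'"
    using run A E S by (auto simp: ys_def ps_def)
  have onen: "one \<rho> \<in> nodes \<rho>" using cob unfolding is_cobdd_def by blast
  have distacc: "distinct (map fst acc)" using dist by simp
  have uacc: "u \<notin> fst ` set acc" using dist by auto
  have pre1: "is_cobdd \<rho> \<and> distinct ys \<and> set ys \<subseteq> vars \<rho> \<and> length ps = length ys \<and>
      (\<forall>p\<in>set ps. fst p \<in> nodes \<rho>) \<and> v \<in> nodes \<rho>"
    using cob dist vars vn onen accinv by (auto simp: ys_def ps_def)
  have R1: "is_cobdd \<rho>1 \<and> extends \<rho> \<rho>1 \<and> w1 \<in> nodes \<rho>1 \<and>
      (\<forall>a. sem \<rho>1 w1 c1 a = sem \<rho> v b (SA a))"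
  proof -
    have "case app \<rho> ys ps (v, b) of (\<rho>', w', c') \<Rightarrow>
         is_cobdd \<rho>' \<and> extends \<rho> \<rho>' \<and> w' \<in> nodes \<rho>' \<and>
         (\<forall>a. sem \<rho>' w' c' a = sem \<rho> v b (subst_assign \<rho> ys ps a))"
      by (rule appc[unfolded app_correct_def, rule_format, OF pre1])
    then show ?thesis using A unfolding SA_def by simp
  qed
  have vars1: "vars \<rho>1 = vars \<rho>" using R1 unfolding extends_def by blast
  have pre2: "is_cobdd \<rho>1 \<and> set rest \<subseteq> vars \<rho>1 \<and> w1 \<in> nodes \<rho>1"
    using R1 vars1 vars by auto
  have R2: "is_cobdd \<rho>2 \<and> extends \<rho>1 \<rho>2 \<and> w2 \<in> nodes \<rho>2 \<and>
      (\<forall>a. sem \<rho>2 w2 c2 a = (\<exists>a'. (\<forall>y. y \<notin> set rest \<longrightarrow> a' y = a y) \<and> sem \<rho>1 w1 c1 a'))"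
  proof -
    have "case ex \<rho>1 rest (w1, c1) of (\<rho>', w', c') \<Rightarrow>
         is_cobdd \<rho>' \<and> extends \<rho>1 \<rho>' \<and> w' \<in> nodes \<rho>' \<and>
         (\<forall>a. sem \<rho>' w' c' a = (\<exists>a'. (\<forall>y. y \<notin> set rest \<longrightarrow> a' y = a y) \<and> sem \<rho>1 w1 c1 a'))"
      by (rule exc[unfolded ex_correct_def, rule_format, OF pre2])
    then show ?thesis using E by simp
  qed
  have ext2: "extends \<rho> \<rho>2" using R1 R2 extends_trans by blast
  have vars2: "vars \<rho>2 = vars \<rho>" using ext2 unfolding extends_def by blast
  have nodes2: "nodes \<rho> \<subseteq> nodes \<rho>2" using ext2 unfolding extends_def by blast
  have cob2: "is_cobdd \<rho>2" using R2 by blast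
  have semv: "sem \<rho>2 v b a = sem \<rho> v b a" for a using sem_extends[OF cob ext2 vn] .
  have sem2: "sem \<rho>2 w2 c2 a = (\<exists>a'. (\<forall>y. y \<notin> set rest \<longrightarrow> a' y = a y) \<and> sem \<rho> v b (SA a'))" for a
    using R1 R2 by simp
  have accsome: "map_of acc y = Some (w,c) \<Longrightarrow> w \<in> nodes \<rho> \<and> xdep \<rho> X w c" for y w c
    using accinv by (auto dest!: map_of_SomeD)
  have Xnr: "x \<in> X \<Longrightarrow> x \<notin> set rest" for x using disj by auto
  have Xnacc: "x \<in> X \<Longrightarrow> map_of acc x = None" for x using disj by (auto simp: map_of_eq_None_iff)
  have Xnu: "x \<in> X \<Longrightarrow> x \<noteq> u" for x using disj by auto
  have inX: "y \<in> vars \<rho> \<Longrightarrow> map_of acc y = None \<Longrightarrow> y \<noteq> u \<Longrightarrow> y \<notin> set rest \<Longrightarrow> y \<in> X" for y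
    using vars by (auto simp: map_of_eq_None_iff)
  have SAloc: "sem \<rho> v b (SA a1) = sem \<rho> v b (SA a2)"
    if X12: "\<forall>x\<in>X. a1 x = a2 x" and R12: "\<forall>y\<in>set rest. a1 y = a2 y" for a1 a2
  proof (rule sem_local[OF cob vn], intro ballI)
    fix y assume yv: "y \<in> vars \<rho>"
    show "SA a1 y = SA a2 y"
    proof (cases "map_of acc y")
      case None
      then show ?thesis using X12 R12 inX[OF yv None] by (auto simp: SAe)
    next
      case (Some p)
      obtain w c where p: "p = (w,c)" by (cases p)
      have "xdep \<rho> X w c" using accsome Some p by blast
      then show ?thesis using Some p X12 by (simp add: SAe xdep_def)
    qed
  qed
  have w2dep: "xdep \<rho>2 X w2 c2"
  proof -
    have imp: "sem \<rho>2 w2 c2 a'" if h: "sem \<rho>2 w2 c2 a" and ag: "\<forall>x\<in>X. a x = a' x" for a a'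
    proof -
      obtain a1 where a1: "\<forall>y. y \<notin> set rest \<longrightarrow> a1 y = a y" "sem \<rho> v b (SA a1)" using h sem2 by blast
      define a2 where "a2 = (\<lambda>y. if y \<in> set rest then a1 y else a' y)"
      have "sem \<rho> v b (SA a2) = sem \<rho> v b (SA a1)"
        by (rule SAloc) (use a1 ag Xnr in \<open>auto simp: a2_def\<close>)
      then have "sem \<rho> v b (SA a2)" using a1 by simp
      moreover have "\<forall>y. y \<notin> set rest \<longrightarrow> a2 y = a' y" by (simp add: a2_def)
      ultimately show ?thesis using sem2 by blast
    qed
    show ?thesis unfolding xdep_def using imp by (metis (full_types))
  qed
  have accinv2: "\<forall>(u',w,c)\<in>set (acc @ [(u,w2,c2)]). w \<in> nodes \<rho>2 \<and> xdep \<rho>2 X w c"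
  proof -
    have "w \<in> nodes \<rho>2 \<and> xdep \<rho>2 X w c" if "(u',w,c) \<in> set acc" for u' w c
    proof -
      have "w \<in> nodes \<rho>" "xdep \<rho> X w c" using accinv that by auto
      then show ?thesis using nodes2 sem_extends[OF cob ext2] by (auto simp: xdep_def)
    qed
    then show ?thesis using R2 w2dep by auto
  qed
  have dominv2: "\<exists>a''. (\<forall>x\<in>X. a'' x = a x) \<and> (\<forall>(u',w,c)\<in>set (acc @ [(u,w2,c2)]). a'' u' = sem \<rho>2 w c a)
      \<and> sem \<rho>2 v b a''"
    if D: "\<exists>a'. (\<forall>x\<in>X. a' x = a x) \<and> sem \<rho>2 v b a'" for a
  proof -
    from D semv have D': "\<exists>a'. (\<forall>x\<in>X. a' x = a x) \<and> sem \<rho> v b a'" by simp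
    then obtain a'' where a'': "\<forall>x\<in>X. a'' x = a x" "\<forall>(u',w,c)\<in>set acc. a'' u' = sem \<rho> w c a"
      "sem \<rho> v b a''" using dominv by blast
    have accval: "sem \<rho>2 w c a = sem \<rho> w c a" if "(u',w,c) \<in> set acc" for u' w c
      using sem_extends[OF cob ext2] accinv that by auto
    show ?thesis
    proof (cases "sem \<rho>2 w2 c2 a")
      case True
      then obtain a1 where a1: "\<forall>y. y \<notin> set rest \<longrightarrow> a1 y = a y" "sem \<rho> v b (SA a1)" using sem2 by blast
      have x: "\<forall>x\<in>X. SA a1 x = a x" using a1 Xnr Xnacc Xnu by (simp add: SAe)
      have "SA a1 u' = sem \<rho>2 w c a" if "(u',w,c) \<in> set acc" for u' w c
      proof -
        have ms: "map_of acc u' = Some (w,c)" using distacc that by simp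
        have "xdep \<rho> X w c" using accsome ms by blast
        then have "sem \<rho> w c a1 = sem \<rho> w c a" using a1 Xnr unfolding xdep_def by metis
        then show ?thesis using ms accval[OF that] by (simp add: SAe)
      qed
      moreover have "SA a1 u = sem \<rho>2 w2 c2 a"
      proof -
        have "map_of acc u = None" using uacc by (simp add: map_of_eq_None_iff)
        then show ?thesis using True by (simp add: SAe)
      qed
      ultimately show ?thesis using x a1 semv by (intro exI[of _ "SA a1"]) auto
    next
      case False
      have "\<not> a'' u"
      proof
        assume au: "a'' u"
        define a1 where "a1 = (\<lambda>y. if y \<in> set rest then a'' y else a y)"
        have "sem \<rho> v b (SA a1) = sem \<rho> v b a''"
        proof (rule sem_local[OF cob vn], intro ballI)
          fix y assume yv: "y \<in> vars \<rho>"
          show "SA a1 y = a'' y"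
          proof (cases "map_of acc y")
            case None
            then show ?thesis using au a''(1) inX[OF yv None] by (auto simp: SAe a1_def)
          next
            case (Some p)
            obtain w c where p: "p = (w,c)" by (cases p)
            have inacc: "(y,w,c) \<in> set acc" using Some p by (auto dest: map_of_SomeD)
            have "xdep \<rho> X w c" using accsome Some p by blast
            then have "sem \<rho> w c a1 = sem \<rho> w c a" unfolding xdep_def using Xnr by (metis a1_def)
            then show ?thesis using Some p a''(2) inacc by (auto simp: SAe)
          qed
        qed
        then have "sem \<rho> v b (SA a1)" using a''(3) by simp
        moreover have "\<forall>y. y \<notin> set rest \<longrightarrow> a1 y = a y" by (simp add: a1_def)
        ultimately have "sem \<rho>2 w2 c2 a" using sem2 by blast
        then show False using False by simp
      qed
      then show ?thesis using a'' False semv accval by (intro exI[of _ a'']) auto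
    qed
  qed
  have IH: "length res' = length rest \<and> is_cobdd \<rho>f' \<and> extends \<rho>2 \<rho>f' \<and>
    (\<forall>(w,c)\<in>set res'. w \<in> nodes \<rho>f' \<and> xdep \<rho>f' X w c) \<and>
    (\<forall>a. (\<exists>a'. (\<forall>x\<in>X. a' x = a x) \<and> sem \<rho>2 v b a') \<longrightarrow>
       (\<exists>a''. (\<forall>x\<in>X. a'' x = a x) \<and> (\<forall>(u',w,c)\<in>set ((acc @ [(u,w2,c2)]) @ zip rest res'). a'' u' = sem \<rho>f' w c a)
          \<and> sem \<rho>2 v b a''))"
    apply (rule Cons.IH[OF cob2 _ _ _ _ accinv2 _ S])
    using vars2 vars disj dist vn nodes2 dominv2 by auto
  have extf: "extends \<rho> \<rho>f'" using IH ext2 extends_trans by blast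
  have cobf: "is_cobdd \<rho>f'" using IH by blast
  have w2f: "w2 \<in> nodes \<rho>f'" "xdep \<rho>f' X w2 c2"
    using IH R2 w2dep sem_extends[OF cob2, of \<rho>f' w2] unfolding extends_def xdep_def by auto
  show ?case
    unfolding fr using IH extf w2f semv by auto
qed


theorem lemma2:
  fixes app :: "('v::linorder, 'n) app_op" and ex :: "('v, 'n) ex_op"
    and \<rho> :: "('v, 'n) cobdd" and X :: "'v set" and us :: "'v list"
    and v :: 'n and b :: bool
  assumes "app_correct app" and "ex_correct ex"
    and "is_cobdd \<rho>"
    and "vars \<rho> = X \<union> set us" and "X \<inter> set us = {}" and "distinct us"
    and "v \<in> nodes \<rho>"
    and "SolveFunctionalEq app ex \<rho> us v b = (\<rho>', res)"
  shows "length res = length us \<and>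
    (\<forall>i < length us. fst (res ! i) \<in> nodes \<rho>' \<and>
       (\<forall>a a'. (\<forall>x\<in>X. a x = a' x) \<longrightarrow>
          sem \<rho>' (fst (res ! i)) (snd (res ! i)) a = sem \<rho>' (fst (res ! i)) (snd (res ! i)) a')) \<and>
    (\<forall>a. (\<exists>a'. (\<forall>x\<in>X. a' x = a x) \<and> sem \<rho> v b a') \<longrightarrow>
       sem \<rho> v b (subst_assign \<rho>' us res a))"
proof -
  have run: "solve_aux app ex \<rho> [] us v b = (\<rho>', res)"
    using assms(8) unfolding SolveFunctionalEq_def .
  have dom0: "\<forall>a. (\<exists>a'. (\<forall>x\<in>X. a' x = a x) \<and> sem \<rho> v b a') \<longrightarrow>
       (\<exists>a''. (\<forall>x\<in>X. a'' x = a x) \<and> (\<forall>(u,w,c)\<in>set ([]::('v \<times> 'n \<times> bool) list). a'' u = sem \<rho> w c a) \<and> sem \<rho> v b a'')"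
    by auto
  have R: "length res = length us \<and> is_cobdd \<rho>' \<and> extends \<rho> \<rho>' \<and>
    (\<forall>(w,c)\<in>set res. w \<in> nodes \<rho>' \<and> xdep \<rho>' X w c) \<and>
    (\<forall>a. (\<exists>a'. (\<forall>x\<in>X. a' x = a x) \<and> sem \<rho> v b a') \<longrightarrow>
       (\<exists>a''. (\<forall>x\<in>X. a'' x = a x) \<and> (\<forall>(u,w,c)\<in>set ([] @ zip us res). a'' u = sem \<rho>' w c a)
          \<and> sem \<rho> v b a''))"
    by (rule solve_aux_correct[OF assms(1,2) assms(3) _ _ _ assms(7) _ dom0 run])
      (use assms(4,5,6) in simp_all)
  have len: "length res = length us" using R by blast
  have part2: "\<forall>i < length us. fst (res ! i) \<in> nodes \<rho>' \<and>
       (\<forall>a a'. (\<forall>x\<in>X. a x = a' x) \<longrightarrow>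
          sem \<rho>' (fst (res ! i)) (snd (res ! i)) a = sem \<rho>' (fst (res ! i)) (snd (res ! i)) a')"
  proof (intro allI impI)
    fix i assume "i < length us"
    then have "res ! i \<in> set res" using len by simp
    then show "fst (res ! i) \<in> nodes \<rho>' \<and>
       (\<forall>a a'. (\<forall>x\<in>X. a x = a' x) \<longrightarrow>
          sem \<rho>' (fst (res ! i)) (snd (res ! i)) a = sem \<rho>' (fst (res ! i)) (snd (res ! i)) a')"
    proof -
      obtain w c where wc: "res ! i = (w,c)" by (cases "res ! i")
      have "w \<in> nodes \<rho>' \<and> xdep \<rho>' X w c" using R \<open>res ! i \<in> set res\<close> wc by fastforce
      then show ?thesis using wc unfolding xdep_def by simp
    qed
  qed
  have part3: "sem \<rho> v b (subst_assign \<rho>' us res a)"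
    if D: "\<exists>a'. (\<forall>x\<in>X. a' x = a x) \<and> sem \<rho> v b a'" for a
  proof -
    have "\<exists>a''. (\<forall>x\<in>X. a'' x = a x) \<and> (\<forall>(u,w,c)\<in>set ([] @ zip us res). a'' u = sem \<rho>' w c a)
          \<and> sem \<rho> v b a''" using R D by blast
    then obtain a'' where a'': "\<forall>x\<in>X. a'' x = a x" "\<forall>(u,w,c)\<in>set ([] @ zip us res). a'' u = sem \<rho>' w c a"
      "sem \<rho> v b a''" by blast
    have "sem \<rho> v b a'' = sem \<rho> v b (subst_assign \<rho>' us res a)"
    proof (rule sem_local[OF assms(3,7)], intro ballI)
      fix y assume yv: "y \<in> vars \<rho>"
      have fz: "fst ` set (zip us res) = set us" using len by (metis map_fst_zip set_map)
      show "a'' y = subst_assign \<rho>' us res a y"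
      proof (cases "y \<in> set us")
        case True
        have "map_of (zip us res) y \<noteq> None"
          using True fz by (simp add: map_of_eq_None_iff)
        then obtain w c where m: "map_of (zip us res) y = Some (w,c)" by auto
        then have "(y,w,c) \<in> set (zip us res)" by (rule map_of_SomeD)
        then have "a'' y = sem \<rho>' w c a" using a''(2) by auto
        then show ?thesis using m by (simp add: subst_assign_def)
      next
        case False
        have "map_of (zip us res) y = None"
          using False fz by (simp add: map_of_eq_None_iff)
        moreover have "y \<in> X" using False yv assms(4) by auto
        ultimately show ?thesis using a''(1) by (simp add: subst_assign_def)
      qed
    qed
    then show ?thesis using a''(3) by simp
  qed
  show ?thesis using len part2 part3 by blast
qed

end
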